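(* Let $P:\{-1,1\}^k\to\{0,1\}$ be a predicate and $Q:\{-1,1\}^k\to\mathbb{R}$. Then $P$ is positively information-theoretically useless for $Q$ if and only if there exists a probability measure $\mu$ on $\{-1,1\}^k$ supported on $P^{-1}(1)$ such that $\mathrm{Opt}^+(Q,\mu)=E_Q^+$.
   Context: Boolean values are encoded as $\pm1$. An instance of Max-$P^+$ (no negations) on variables $x_1,\dots,x_n$ consists of $m$ constraints, constraint $j$ given by indices $a_j^1,\dots,a_j^k\in[n]$ pairwise distinct within the constraint; for $x\in\{-1,1\}^n$ let $x_{a_j}=(x_{a_j^1},\dots,x_{a_j^k})$. For $r\in[-1,1]$, let $E_Q(r)=\mathbb{E}[Q(x)]$ where $x$ has independent coordinates each with expectation $r$ (i.e., $x_i=1$ with probability $(1+r)/2$), and $E_Q^+=\max_{r\in[-1,1]}E_Q(r)$. $P$ is positively information-theoretically useless for $Q$ if for every $\epsilon>0$ there is a Max-$P^+$ instance with $\max_x\frac1m\sum_j P(x_{a_j})=1$ and $\max_x\frac1m\sum_j Q(x_{a_j})\le E_Q^+ +\epsilon$. For a probability measure $\mu$ on $\{-1,1\}^k$ and $p,q\in[0,1]$, $\mu^{p,q}$ is obtained by sampling a string from $\mu$ and then, independently for each coordinate, changing a coordinate equal to $1$ to $-1$ with probability $p$ and a coordinate equal to $-1$ to $1$ with probability $q$. $\mathrm{Opt}^+(Q,\mu)=\max_{p,q\in[0,1]}\mathbb{E}_{x\sim\mu^{p,q}}[Q(x)]$. *)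

theory Defs
  imports "HOL-Analysis.Analysis"
begin

definition cube :: "nat \<Rightarrow> int list set" where
  "cube k = {x. length x = k \<and> set x \<subseteq> {-1, 1}}"

text \<open>A Max-P+ instance on n variables with arity k: a nonempty list of constraints,
  each a list of k pairwise distinct variable indices in [0,n).\<close>
definition valid_instance :: "nat \<Rightarrow> nat \<Rightarrow> nat list list \<Rightarrow> bool" where
  "valid_instance n k I \<longleftrightarrow> I \<noteq> [] \<and>
     (\<forall>a\<in>set I. length a = k \<and> distinct a \<and> set a \<subseteq> {..<n})"

definition inst_val :: "(int list \<Rightarrow> real) \<Rightarrow> nat list list \<Rightarrow> int list \<Rightarrow> real" where
  "inst_val f I x = (\<Sum>a\<leftarrow>I. f (map (\<lambda>i. x ! i) a)) / real (length I)"

definition inst_opt :: "(int list \<Rightarrow> real) \<Rightarrow> nat \<Rightarrow> nat list list \<Rightarrow> real" where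
  "inst_opt f n I = Max ((\<lambda>x. inst_val f I x) ` cube n)"

text \<open>E_Q(r): expectation of Q under independent coordinates with mean r.\<close>
definition E_Q :: "nat \<Rightarrow> (int list \<Rightarrow> real) \<Rightarrow> real \<Rightarrow> real" where
  "E_Q k Q r = (\<Sum>y\<in>cube k. Q y * (\<Prod>i<k. (1 + r * real_of_int (y ! i)) / 2))"

definition E_Q_plus :: "nat \<Rightarrow> (int list \<Rightarrow> real) \<Rightarrow> real" where
  "E_Q_plus k Q = (SUP r\<in>{-1..1}. E_Q k Q r)"

definition pos_it_useless :: "nat \<Rightarrow> (int list \<Rightarrow> real) \<Rightarrow> (int list \<Rightarrow> real) \<Rightarrow> bool" where
  "pos_it_useless k P Q \<longleftrightarrow>
     (\<forall>\<epsilon>>0. \<exists>n I. valid_instance n k I \<and> inst_opt P n I = 1 \<and>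
                 inst_opt Q n I \<le> E_Q_plus k Q + \<epsilon>)"

text \<open>Transition probability of a single coordinate in the noise operator:
  1 becomes -1 with prob. p, -1 becomes 1 with prob. q.\<close>
definition flip_prob :: "real \<Rightarrow> real \<Rightarrow> int \<Rightarrow> int \<Rightarrow> real" where
  "flip_prob p q a b =
     (if a = 1 then (if b = 1 then 1 - p else p)
      else (if b = 1 then q else 1 - q))"

text \<open>Expectation of Q under mu^{p,q}; mu is a probability mass function on cube k.\<close>
definition E_noisy :: "nat \<Rightarrow> (int list \<Rightarrow> real) \<Rightarrow> (int list \<Rightarrow> real) \<Rightarrow> real \<Rightarrow> real \<Rightarrow> real" where
  "E_noisy k Q \<mu> p q =
     (\<Sum>y\<in>cube k. \<mu> y * (\<Sum>z\<in>cube k. Q z * (\<Prod>i<k. flip_prob p q (y ! i) (z ! i))))"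

definition Opt_plus :: "nat \<Rightarrow> (int list \<Rightarrow> real) \<Rightarrow> (int list \<Rightarrow> real) \<Rightarrow> real" where
  "Opt_plus k Q \<mu> = (SUP pq\<in>{0..1} \<times> {0..1}. E_noisy k Q \<mu> (fst pq) (snd pq))"

definition prob_on_cube :: "nat \<Rightarrow> (int list \<Rightarrow> real) \<Rightarrow> bool" where
  "prob_on_cube k \<mu> \<longleftrightarrow> (\<forall>y. \<mu> y \<ge> 0) \<and> (\<forall>y. y \<notin> cube k \<longrightarrow> \<mu> y = 0) \<and>
      (\<Sum>y\<in>cube k. \<mu> y) = 1"

end

theory Submission
  imports Defs
begin

definition LS :: "nat \<Rightarrow> (nat \<Rightarrow> 'a set) \<Rightarrow> 'a list set" where
  "LS n B = {xs. length xs = n \<and> (\<forall>i<n. xs!i \<in> B i)}"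

lemma LS_bij: "bij_betw (\<lambda>f. map f [0..<n]) (PiE {..<n} B) (LS n B)"
proof (rule bij_betw_byWitness[where f'="\<lambda>xs. restrict (nth xs) {..<n}"])
  show "\<forall>a\<in>PiE {..<n} B. restrict (nth (map a [0..<n])) {..<n} = a"
  proof
    fix a assume a: "a \<in> PiE {..<n} B"
    show "restrict (nth (map a [0..<n])) {..<n} = a"
    proof
      fix i show "restrict (nth (map a [0..<n])) {..<n} i = a i"
        using PiE_arb[OF a, of i] by (cases "i<n") auto
    qed
  qed
  show "\<forall>a'\<in>LS n B. map (restrict (nth a') {..<n}) [0..<n] = a'"
    unfolding LS_def by (intro ballI nth_equalityI) auto
  show "(\<lambda>f. map f [0..<n]) ` PiE {..<n} B \<subseteq> LS n B"
    by (auto simp: LS_def PiE_def Pi_def)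
  show "(\<lambda>xs. restrict (nth xs) {..<n}) ` LS n B \<subseteq> PiE {..<n} B"
    by (rule image_subsetI) (unfold restrict_PiE_iff LS_def, auto)
qed

lemma LS_sum_prod:
  fixes F :: "nat \<Rightarrow> 'a \<Rightarrow> 'c::comm_semiring_1"
  assumes "\<And>i. i < n \<Longrightarrow> finite (B i)"
  shows "(\<Sum>xs\<in>LS n B. \<Prod>i<n. F i (xs!i)) = (\<Prod>i<n. \<Sum>b\<in>B i. F i b)"
proof -
  have "(\<Prod>i<n. \<Sum>b\<in>B i. F i b) = (\<Sum>g\<in>PiE {..<n} B. \<Prod>i<n. F i (g i))"
    using assms by (intro prod_sum_PiE) auto
  also have "\<dots> = (\<Sum>g\<in>PiE {..<n} B. \<Prod>i<n. F i (map g [0..<n] ! i))"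
    by (intro sum.cong prod.cong) auto
  also have "\<dots> = (\<Sum>xs\<in>LS n B. \<Prod>i<n. F i (xs!i))"
    using sum.reindex_bij_betw[OF LS_bij, of "\<lambda>xs. \<Prod>i<n. F i (xs!i)" n B] by simp
  finally show ?thesis by simp
qed

lemma LS_finite: assumes "\<And>i. i < n \<Longrightarrow> finite (B i)" shows "finite (LS n B)"
  using bij_betw_finite[OF LS_bij, of n B] assms by (auto intro!: finite_PiE)

lemma LS_card: assumes "\<And>i. i < n \<Longrightarrow> finite (B i)"
  shows "card (LS n B) = (\<Prod>i<n. card (B i))"
  using bij_betw_same_card[OF LS_bij, of n B] assms by (simp add: card_PiE)

lemma cube_LS: "cube k = LS k (\<lambda>_. {-1,1})"
proof (intro set_eqI iffI)
  fix x :: "int list" assume "x \<in> cube k"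
  then have "length x = k" "set x \<subseteq> {-1,1}" by (auto simp: cube_def)
  then show "x \<in> LS k (\<lambda>_. {-1,1})" unfolding LS_def by (auto dest!: nth_mem)
next
  fix x :: "int list" assume "x \<in> LS k (\<lambda>_. {-1,1})"
  then have "length x = k" "\<forall>i<k. x!i \<in> {-1,1}" by (auto simp: LS_def)
  then show "x \<in> cube k" unfolding cube_def by (auto simp: in_set_conv_nth)
qed

lemma finite_cube: "finite (cube k)"
  unfolding cube_LS by (rule LS_finite) auto


lemma sum_group_weighted:
  fixes w h :: "_ \<Rightarrow> real"
  assumes "finite T" "finite C" "\<And>a. a \<in> T \<Longrightarrow> f a \<in> C"
  shows "(\<Sum>a\<in>T. w a * h (f a)) = (\<Sum>z\<in>C. h z * (\<Sum>a\<in>{a\<in>T. f a = z}. w a))"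
proof -
  have "(\<Sum>a\<in>T. w a * h (f a)) = (\<Sum>a\<in>T. \<Sum>z\<in>C. if f a = z then w a * h z else 0)"
    using assms(2,3) by (intro sum.cong refl) (simp add: sum.delta)
  also have "\<dots> = (\<Sum>z\<in>C. \<Sum>a\<in>T. if f a = z then w a * h z else 0)"
    by (rule sum.swap)
  also have "\<dots> = (\<Sum>z\<in>C. h z * (\<Sum>a\<in>{a\<in>T. f a = z}. w a))"
    using assms(1) by (intro sum.cong refl) (simp add: sum.inter_filter[symmetric] sum_distrib_left mult.commute)
  finally show ?thesis .
qed

lemma flip_sum: "flip_prob p q a (-1) + flip_prob p q a 1 = 1"
  by (simp add: flip_prob_def)

lemma flip_nonneg: "p \<in> {0..1} \<Longrightarrow> q \<in> {0..1} \<Longrightarrow> 0 \<le> flip_prob p q a b"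
  by (auto simp: flip_prob_def)

lemma flip_le1: "p \<in> {0..1} \<Longrightarrow> q \<in> {0..1} \<Longrightarrow> flip_prob p q a b \<le> 1"
  by (auto simp: flip_prob_def)

lemma weight_sum1: "(\<Sum>x\<in>cube N. \<Prod>i<N. flip_prob p q (xs!i) (x!i)) = 1"
proof -
  have "(\<Sum>x\<in>cube N. \<Prod>i<N. flip_prob p q (xs!i) (x!i)) = (\<Prod>i<N. \<Sum>b\<in>{-1,1}. flip_prob p q (xs!i) b)"
    unfolding cube_LS by (rule LS_sum_prod) auto
  also have "\<dots> = 1" using flip_sum by simp
  finally show ?thesis .
qed

lemma noise_marg:
  fixes Q :: "int list \<Rightarrow> real"
  assumes a: "length a = k" "distinct a" "set a \<subseteq> {..<N}"
  shows "(\<Sum>x\<in>cube N. (\<Prod>i<N. flip_prob p q (xs!i) (x!i)) * Q (map (nth x) a))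
       = (\<Sum>z\<in>cube k. Q z * (\<Prod>j<k. flip_prob p q (xs!(a!j)) (z!j)))"
proof -
  define F where "F i b = flip_prob p q (xs!i) b" for i b
  have mapin: "map (nth x) a \<in> cube k" if "x \<in> cube N" for x
  proof -
    have "x ! (a!j) \<in> {-1,1}" if "j < k" for j
    proof -
      have "a!j \<in> set a" using a that by simp
      then have "a!j < length x" using a \<open>x \<in> cube N\<close> unfolding cube_def by auto
      then have "x!(a!j) \<in> set x" by simp
      then show ?thesis using \<open>x \<in> cube N\<close> unfolding cube_def by auto
    qed
    then show ?thesis using a unfolding cube_LS LS_def by auto
  qed
  have inner: "(\<Sum>x\<in>{x\<in>cube N. map (nth x) a = z}. \<Prod>i<N. F i (x!i)) = (\<Prod>j<k. F (a!j) (z!j))"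
    if z: "z \<in> cube k" for z
  proof -
    define B where "B i = {b\<in>{-1,1}. \<forall>j<k. a!j = i \<longrightarrow> b = z!j}" for i
    have zin: "z!j \<in> {-1,1}" if "j<k" for j using z that unfolding cube_LS LS_def by auto
    have Ba: "B (a!j) = {z!j}" if "j < k" for j
    proof -
      have "j' = j" if "j' < k" "a!j' = a!j" for j'
        using a \<open>j<k\<close> that nth_eq_iff_index_eq by metis
      then show ?thesis using zin[OF that] that unfolding B_def by auto
    qed
    have Bn: "B i = {-1,1}" if "i \<notin> set a" for i
      using that a unfolding B_def by (auto simp: in_set_conv_nth)
    have seteq: "{x\<in>cube N. map (nth x) a = z} = LS N B"
    proof (intro set_eqI iffI)
      fix x :: "int list" assume "x \<in> {x\<in>cube N. map (nth x) a = z}"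
      then have x: "x \<in> cube N" "map (nth x) a = z" by auto
      have "x!i \<in> B i" if "i < N" for i
      proof -
        have "x!i \<in> {-1,1}" using x(1) that unfolding cube_LS LS_def by auto
        moreover have "x!i = z!j" if "j<k" "a!j = i" for j
          using x(2) that a by auto
        ultimately show ?thesis unfolding B_def by auto
      qed
      then show "x \<in> LS N B" using x(1) unfolding LS_def cube_def by auto
    next
      fix x :: "int list" assume x: "x \<in> LS N B"
      have "x \<in> cube N" using x unfolding cube_LS LS_def B_def by auto
      moreover have "map (nth x) a = z"
      proof (rule nth_equalityI)
        show "length (map (nth x) a) = length z" using a z by (simp add: cube_def)
        fix j assume "j < length (map (nth x) a)"
        then have j: "j < k" using a by simp
        then have "a!j \<in> set a" using a by simp
        then have "a!j < N" using a by auto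
        then have "x!(a!j) \<in> B (a!j)" using x unfolding LS_def by auto
        then show "map (nth x) a ! j = z ! j" using Ba[OF j] j a by simp
      qed
      ultimately show "x \<in> {x\<in>cube N. map (nth x) a = z}" by simp
    qed
    have "(\<Sum>x\<in>{x\<in>cube N. map (nth x) a = z}. \<Prod>i<N. F i (x!i)) = (\<Prod>i<N. \<Sum>b\<in>B i. F i b)"
      unfolding seteq by (rule LS_sum_prod) (simp add: B_def)
    also have "\<dots> = (\<Prod>i\<in>set a. \<Sum>b\<in>B i. F i b)"
    proof (rule prod.mono_neutral_right)
      show "\<forall>i\<in>{..<N} - set a. (\<Sum>b\<in>B i. F i b) = 1"
        using Bn flip_sum unfolding F_def by auto
    qed (use a in auto)
    also have "\<dots> = (\<Prod>j<k. \<Sum>b\<in>B (a!j). F (a!j) b)"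
    proof -
      have "set a = (nth a) ` {..<k}" using a by (auto simp: in_set_conv_nth)
      moreover have "inj_on (nth a) {..<k}" using a by (auto simp: inj_on_def nth_eq_iff_index_eq)
      ultimately show ?thesis by (simp add: prod.reindex)
    qed
    also have "\<dots> = (\<Prod>j<k. F (a!j) (z!j))"
      using Ba by (intro prod.cong) auto
    finally show ?thesis .
  qed
  have "(\<Sum>x\<in>cube N. (\<Prod>i<N. F i (x!i)) * Q (map (nth x) a))
       = (\<Sum>z\<in>cube k. Q z * (\<Sum>x\<in>{x\<in>cube N. map (nth x) a = z}. \<Prod>i<N. F i (x!i)))"
    by (rule sum_group_weighted) (auto simp: finite_cube mapin)
  also have "\<dots> = (\<Sum>z\<in>cube k. Q z * (\<Prod>j<k. F (a!j) (z!j)))"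
    using inner by (intro sum.cong) auto
  finally show ?thesis unfolding F_def .
qed

lemma map_in_cube:
  assumes "x \<in> cube N" "length a = k" "set a \<subseteq> {..<N}"
  shows "map (nth x) a \<in> cube k"
proof -
  have "x ! (a!j) \<in> {-1,1}" if "j < k" for j
  proof -
    have "a!j \<in> set a" using assms that by simp
    then have "a!j < length x" using assms unfolding cube_def by auto
    then have "x!(a!j) \<in> set x" by simp
    then show ?thesis using assms unfolding cube_def by auto
  qed
  then show ?thesis using assms unfolding cube_LS LS_def by auto
qed

lemma emp_sum:
  fixes G :: "'b \<Rightarrow> real"
  assumes "finite C" "\<forall>a\<in>set I. f a \<in> C"
  shows "(\<Sum>y\<in>C. real (length (filter (\<lambda>a. f a = y) I)) * G y) = (\<Sum>a\<leftarrow>I. G (f a))"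
  using assms(2)
proof (induction I)
  case Nil then show ?case by simp
next
  case (Cons b I)
  have "(\<Sum>y\<in>C. real (length (filter (\<lambda>a. f a = y) (b#I))) * G y)
      = (\<Sum>y\<in>C. real (length (filter (\<lambda>a. f a = y) I)) * G y + (if f b = y then G y else 0))"
    by (intro sum.cong) (auto simp: algebra_simps)
  also have "\<dots> = (\<Sum>a\<leftarrow>I. G (f a)) + G (f b)"
    using Cons assms(1) by (simp add: sum.distrib sum.delta)
  finally show ?case by simp
qed

lemma sum_list_sum_swap:
  fixes F :: "'a \<Rightarrow> 'b \<Rightarrow> real"
  shows "(\<Sum>a\<leftarrow>I. \<Sum>x\<in>S. F a x) = (\<Sum>x\<in>S. \<Sum>a\<leftarrow>I. F a x)"
  by (induction I) (simp_all add: sum.distrib)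

lemma all_one:
  fixes h :: "'a \<Rightarrow> real"
  assumes "\<forall>a\<in>set I. h a \<le> 1"
  shows "(\<Sum>a\<leftarrow>I. h a) \<le> real (length I) \<and> ((\<Sum>a\<leftarrow>I. h a) = real (length I) \<longrightarrow> (\<forall>a\<in>set I. h a = 1))"
  using assms
proof (induction I)
  case Nil then show ?case by simp
next
  case (Cons b I)
  then have "h b \<le> 1" "(\<Sum>a\<leftarrow>I. h a) \<le> real (length I)" by auto
  moreover have "(\<Sum>a\<leftarrow>b#I. h a) = h b + (\<Sum>a\<leftarrow>I. h a)" by simp
  moreover have "real (length (b#I)) = 1 + real (length I)" by simp
  ultimately have le: "(\<Sum>a\<leftarrow>b#I. h a) \<le> real (length (b#I))" by linarith
  have "\<forall>a\<in>set (b#I). h a = 1" if eq: "(\<Sum>a\<leftarrow>b#I. h a) = real (length (b#I))"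
  proof -
    have s: "(\<Sum>a\<leftarrow>b#I. h a) = h b + (\<Sum>a\<leftarrow>I. h a)" "real (length (b#I)) = 1 + real (length I)" by simp_all
    have hb: "h b = 1" and sI: "(\<Sum>a\<leftarrow>I. h a) = real (length I)"
      using eq s \<open>h b \<le> 1\<close> \<open>(\<Sum>a\<leftarrow>I. h a) \<le> real (length I)\<close> by linarith+
    have "\<forall>a\<in>set I. h a \<le> 1" using Cons.prems by simp
    then have "\<forall>a\<in>set I. h a = 1" using Cons.IH sI by blast
    then show ?thesis using hb by simp
  qed
  then show ?case using le by blast
qed

lemma sum_list_const_real: "(\<Sum>a\<leftarrow>I. (c::real)) = real (length I) * c"
  by (induction I) (simp_all add: algebra_simps)

definition gN :: "nat \<Rightarrow> (int list \<Rightarrow> real) \<Rightarrow> int list \<Rightarrow> real \<Rightarrow> real \<Rightarrow> real" where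
  "gN k Q y p q = (\<Sum>z\<in>cube k. Q z * (\<Prod>i<k. flip_prob p q (y ! i) (z ! i)))"

lemma E_noisy_gN: "E_noisy k Q \<mu> p q = (\<Sum>y\<in>cube k. \<mu> y * gN k Q y p q)"
  by (simp add: E_noisy_def gN_def)

lemma dir1_eps:
  fixes P Q :: "int list \<Rightarrow> real"
  assumes P01: "\<forall>x\<in>cube k. P x \<in> {0, 1}" and vi: "valid_instance N k I"
    and opt: "inst_opt P N I = 1"
  shows "\<exists>\<mu>. prob_on_cube k \<mu> \<and> (\<forall>y\<in>cube k. \<mu> y > 0 \<longrightarrow> P y = 1) \<and>
     (\<forall>p\<in>{0..1}. \<forall>q\<in>{0..1}. E_noisy k Q \<mu> p q \<le> inst_opt Q N I)"
proof -
  have "set (replicate N (1::int)) \<subseteq> {-1,1}" by (cases N) auto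
  then have "replicate N 1 \<in> cube N" by (simp add: cube_def)
  then have ne: "cube N \<noteq> {}" by blast
  have fin: "finite ((\<lambda>x. inst_val P I x) ` cube N)" by (simp add: finite_cube)
  have "inst_opt P N I \<in> (\<lambda>x. inst_val P I x) ` cube N"
    unfolding inst_opt_def using fin ne by (intro Max_in) auto
  then obtain x0 where x0: "x0 \<in> cube N" "inst_val P I x0 = 1" using opt by auto
  define m where "m = real (length I)"
  have mpos: "m > 0" using vi unfolding valid_instance_def m_def by auto
  define f where "f a = map (nth x0) a" for a
  have fin_cube: "f a \<in> cube k" if "a \<in> set I" for a
    using map_in_cube[OF x0(1)] vi that unfolding valid_instance_def f_def by auto
  have "(\<Sum>a\<leftarrow>I. P (f a)) / m = 1" using x0(2) unfolding inst_val_def f_def m_def .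
  then have "(\<Sum>a\<leftarrow>I. P (f a)) = real (length I)" using mpos unfolding m_def by (simp add: divide_eq_eq)
  moreover have "\<forall>a\<in>set I. P (f a) \<le> 1"
  proof
    fix a assume "a \<in> set I"
    then have "P (f a) \<in> {0,1}" using fin_cube P01 by blast
    then show "P (f a) \<le> 1" by auto
  qed
  ultimately have Pf: "\<forall>a\<in>set I. P (f a) = 1" using all_one[of I "\<lambda>a. P (f a)"] by blast
  define \<mu> where "\<mu> y = real (length (filter (\<lambda>a. f a = y) I)) / m" for y
  have musum: "(\<Sum>y\<in>cube k. \<mu> y * G y) = (\<Sum>a\<leftarrow>I. G (f a)) / m" for G
  proof -
    have "(\<Sum>y\<in>cube k. \<mu> y * G y) = (\<Sum>y\<in>cube k. real (length (filter (\<lambda>a. f a = y) I)) * G y) / m"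
      unfolding \<mu>_def by (simp add: sum_divide_distrib)
    also have "\<dots> = (\<Sum>a\<leftarrow>I. G (f a)) / m"
      using emp_sum[of "cube k" I f G] fin_cube by (simp add: finite_cube)
    finally show ?thesis .
  qed
  have prob: "prob_on_cube k \<mu>"
  proof -
    have "\<mu> y = 0" if "y \<notin> cube k" for y
    proof -
      have "filter (\<lambda>a. f a = y) I = []" using fin_cube that by (auto simp: filter_empty_conv)
      then show ?thesis unfolding \<mu>_def by simp
    qed
    moreover have "(\<Sum>y\<in>cube k. \<mu> y) = 1"
      using musum[of "\<lambda>_. 1"] mpos by (simp add: sum_list_const_real m_def)
    ultimately show ?thesis unfolding prob_on_cube_def \<mu>_def using mpos by auto
  qed
  have supp: "\<forall>y\<in>cube k. \<mu> y > 0 \<longrightarrow> P y = 1"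
  proof (intro ballI impI)
    fix y assume "\<mu> y > 0"
    then have "filter (\<lambda>a. f a = y) I \<noteq> []" unfolding \<mu>_def by auto
    then obtain a where "a \<in> set I" "f a = y" by (auto simp: filter_empty_conv)
    then show "P y = 1" using Pf by auto
  qed
  have ineq: "E_noisy k Q \<mu> p q \<le> inst_opt Q N I" if p: "p \<in> {0..1}" and q: "q \<in> {0..1}" for p q
  proof -
    define w where "w x = (\<Prod>i<N. flip_prob p q (x0!i) (x!i))" for x
    have g_eq: "gN k Q (f a) p q = (\<Sum>x\<in>cube N. w x * Q (map (nth x) a))" if a: "a \<in> set I" for a
    proof -
      have al: "length a = k" "distinct a" "set a \<subseteq> {..<N}" using vi a unfolding valid_instance_def by auto
      have "gN k Q (f a) p q = (\<Sum>z\<in>cube k. Q z * (\<Prod>j<k. flip_prob p q (x0!(a!j)) (z!j)))"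
        unfolding gN_def f_def using al by (intro sum.cong refl arg_cong2[where f="(*)"] prod.cong) auto
      then show ?thesis using noise_marg[OF al, of p q x0 Q] unfolding w_def by simp
    qed
    have "E_noisy k Q \<mu> p q = (\<Sum>a\<leftarrow>I. gN k Q (f a) p q) / m"
      unfolding E_noisy_gN by (rule musum)
    also have "\<dots> = (\<Sum>a\<leftarrow>I. \<Sum>x\<in>cube N. w x * Q (map (nth x) a)) / m"
      using g_eq by (simp cong: map_cong)
    also have "\<dots> = (\<Sum>x\<in>cube N. w x * inst_val Q I x)"
      unfolding sum_list_sum_swap inst_val_def m_def
      by (simp add: sum_divide_distrib sum_list_const_mult)
    also have "\<dots> \<le> (\<Sum>x\<in>cube N. w x * inst_opt Q N I)"
    proof (rule sum_mono)
      fix x assume x: "x \<in> cube N"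
      have "w x \<ge> 0" unfolding w_def using p q by (intro prod_nonneg) (simp add: flip_nonneg)
      moreover have "inst_val Q I x \<le> inst_opt Q N I"
        unfolding inst_opt_def using x by (intro Max_ge) (auto simp: finite_cube)
      ultimately show "w x * inst_val Q I x \<le> w x * inst_opt Q N I" by (simp add: mult_left_mono)
    qed
    also have "\<dots> = inst_opt Q N I"
      using weight_sum1[where N=N and p=p and q=q and xs=x0] unfolding w_def by (simp add: sum_distrib_right[symmetric])
    finally show ?thesis .
  qed
  show ?thesis using prob supp ineq by blast
qed

definition QM :: "nat \<Rightarrow> (int list \<Rightarrow> real) \<Rightarrow> real" where
  "QM k Q = (\<Sum>z\<in>cube k. \<bar>Q z\<bar>)"

lemma QM_nonneg: "0 \<le> QM k Q" unfolding QM_def by (simp add: sum_nonneg)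

lemma Q_le_QM: "z \<in> cube k \<Longrightarrow> \<bar>Q z\<bar> \<le> QM k Q"
  unfolding QM_def by (rule member_le_sum) (auto simp: finite_cube)

lemma gN_bound:
  assumes "p \<in> {0..1}" "q \<in> {0..1}"
  shows "\<bar>gN k Q y p q\<bar> \<le> QM k Q"
proof -
  have "\<bar>gN k Q y p q\<bar> \<le> (\<Sum>z\<in>cube k. \<bar>Q z * (\<Prod>i<k. flip_prob p q (y ! i) (z ! i))\<bar>)"
    unfolding gN_def by (rule sum_abs)
  also have "\<dots> \<le> (\<Sum>z\<in>cube k. \<bar>Q z\<bar>)"
  proof (rule sum_mono)
    fix z
    have "0 \<le> (\<Prod>i<k. flip_prob p q (y ! i) (z ! i))" "(\<Prod>i<k. flip_prob p q (y ! i) (z ! i)) \<le> 1"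
      using assms by (auto intro!: prod_nonneg prod_le_1 simp: flip_nonneg flip_le1)
    then show "\<bar>Q z * (\<Prod>i<k. flip_prob p q (y ! i) (z ! i))\<bar> \<le> \<bar>Q z\<bar>"
      by (simp add: abs_mult mult_left_le)
  qed
  finally show ?thesis unfolding QM_def .
qed

lemma E_noisy_bound:
  assumes "prob_on_cube k \<mu>" "p \<in> {0..1}" "q \<in> {0..1}"
  shows "\<bar>E_noisy k Q \<mu> p q\<bar> \<le> QM k Q"
proof -
  have "\<bar>E_noisy k Q \<mu> p q\<bar> \<le> (\<Sum>y\<in>cube k. \<bar>\<mu> y * gN k Q y p q\<bar>)"
    unfolding E_noisy_gN by (rule sum_abs)
  also have "\<dots> \<le> (\<Sum>y\<in>cube k. \<mu> y * QM k Q)"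
  proof (rule sum_mono)
    fix y
    have "\<mu> y \<ge> 0" using assms(1) unfolding prob_on_cube_def by auto
    then show "\<bar>\<mu> y * gN k Q y p q\<bar> \<le> \<mu> y * QM k Q"
      using gN_bound[OF assms(2,3)] by (simp add: abs_mult mult_left_mono)
  qed
  also have "\<dots> = QM k Q" using assms(1) unfolding prob_on_cube_def by (simp add: sum_distrib_right[symmetric])
  finally show ?thesis .
qed

lemma bdd_noisy:
  assumes "prob_on_cube k \<mu>"
  shows "bdd_above ((\<lambda>pq. E_noisy k Q \<mu> (fst pq) (snd pq)) ` ({0..1} \<times> {0..1}))"
proof (rule bdd_aboveI[where M="QM k Q"])
  fix x assume "x \<in> (\<lambda>pq. E_noisy k Q \<mu> (fst pq) (snd pq)) ` ({0..1} \<times> {0..1})"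
  then obtain p q where "p \<in> {0..1}" "q \<in> {0..1}" "x = E_noisy k Q \<mu> p q" by auto
  then show "x \<le> QM k Q" using E_noisy_bound[OF assms, of p q Q] by simp
qed

lemma noisy_le_Opt:
  assumes "prob_on_cube k \<mu>" "p \<in> {0..1}" "q \<in> {0..1}"
  shows "E_noisy k Q \<mu> p q \<le> Opt_plus k Q \<mu>"
proof -
  have "E_noisy k Q \<mu> (fst (p,q)) (snd (p,q)) \<le> Opt_plus k Q \<mu>"
    unfolding Opt_plus_def by (rule cSUP_upper) (use assms bdd_noisy[OF assms(1)] in auto)
  then show ?thesis by simp
qed

lemma Opt_le:
  assumes "\<And>p q. p \<in> {0..1} \<Longrightarrow> q \<in> {0..1} \<Longrightarrow> E_noisy k Q \<mu> p q \<le> c"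
  shows "Opt_plus k Q \<mu> \<le> c"
  unfolding Opt_plus_def by (rule cSUP_least) (use assms in auto)

lemma gN_EQ:
  assumes "p \<in> {0..1}"
  shows "gN k Q y p (1 - p) = E_Q k Q (1 - 2 * p)"
  unfolding gN_def E_Q_def
proof (intro sum.cong refl arg_cong2[where f="(*)"] prod.cong)
  fix z i assume z: "z \<in> cube k" and i: "i \<in> {..<k}"
  then have "z ! i \<in> {-1,1}" unfolding cube_LS LS_def by auto
  then show "flip_prob p (1 - p) (y ! i) (z ! i) = (1 + (1 - 2 * p) * real_of_int (z ! i)) / 2"
    by (auto simp: flip_prob_def)
qed

lemma EQ_as_noisy:
  assumes "prob_on_cube k \<mu>" "p \<in> {0..1}"
  shows "E_noisy k Q \<mu> p (1 - p) = E_Q k Q (1 - 2 * p)"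
  unfolding E_noisy_gN gN_EQ[OF assms(2)] using assms(1) unfolding prob_on_cube_def
  by (simp add: sum_distrib_right[symmetric])

lemma EQ_bound:
  assumes "r \<in> {-1..1}" shows "\<bar>E_Q k Q r\<bar> \<le> QM k Q"
proof -
  have p: "(1 - r) / 2 \<in> {0..1}" and q: "1 - (1 - r) / 2 \<in> {0..1}" using assms by auto
  have "E_Q k Q r = gN k Q [] ((1 - r) / 2) (1 - (1 - r) / 2)"
    using gN_EQ[OF p, of k Q "[]"] by (simp add: field_simps)
  then show ?thesis using gN_bound[OF p q] by simp
qed

lemma bdd_EQ: "bdd_above ((\<lambda>r. E_Q k Q r) ` {-1..1})"
proof (rule bdd_aboveI[where M="QM k Q"])
  fix x assume "x \<in> (\<lambda>r. E_Q k Q r) ` {-1..1}"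
  then obtain r where "r \<in> {-1..1}" "x = E_Q k Q r" by auto
  then show "x \<le> QM k Q" using EQ_bound[of r k Q] by simp
qed

lemma EQ_le_Eplus: "r \<in> {-1..1} \<Longrightarrow> E_Q k Q r \<le> E_Q_plus k Q"
  unfolding E_Q_plus_def by (rule cSUP_upper) (use bdd_EQ in auto)

lemma Eplus_le_Opt:
  assumes "prob_on_cube k \<mu>"
  shows "E_Q_plus k Q \<le> Opt_plus k Q \<mu>"
  unfolding E_Q_plus_def
proof (rule cSUP_least)
  fix r :: real assume r: "r \<in> {-1..1}"
  define p where "p = (1 - r) / 2"
  have p: "p \<in> {0..1}" "1 - p \<in> {0..1}" using r unfolding p_def by auto
  have "E_Q k Q r = E_noisy k Q \<mu> p (1 - p)"
    using EQ_as_noisy[OF assms p(1), of Q] unfolding p_def by (simp add: field_simps)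
  also have "\<dots> \<le> Opt_plus k Q \<mu>" by (rule noisy_le_Opt[OF assms p])
  finally show "E_Q k Q r \<le> Opt_plus k Q \<mu>" .
qed auto

lemma dir1:
  fixes P Q :: "int list \<Rightarrow> real"
  assumes P01: "\<forall>x\<in>cube k. P x \<in> {0, 1}" and U: "pos_it_useless k P Q"
  shows "\<exists>\<mu>. prob_on_cube k \<mu> \<and> (\<forall>y\<in>cube k. \<mu> y > 0 \<longrightarrow> P y = 1) \<and>
         Opt_plus k Q \<mu> = E_Q_plus k Q"
proof -
  define E where "E = E_Q_plus k Q"
  define R where "R n \<mu> \<longleftrightarrow> prob_on_cube k \<mu> \<and> (\<forall>y\<in>cube k. \<mu> y > 0 \<longrightarrow> P y = 1) \<and>
     (\<forall>p\<in>{0..1}. \<forall>q\<in>{0..1}. E_noisy k Q \<mu> p q \<le> E + inverse (real (Suc n)))" for n \<mu>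
  have "\<exists>\<mu>. R n \<mu>" for n
  proof -
    have "inverse (real (Suc n)) > 0" by simp
    then obtain N I where NI: "valid_instance N k I" "inst_opt P N I = 1"
      "inst_opt Q N I \<le> E + inverse (real (Suc n))"
      using U unfolding pos_it_useless_def E_def by blast
    from dir1_eps[OF P01 NI(1,2), of Q] obtain \<mu> where
      "prob_on_cube k \<mu>" "\<forall>y\<in>cube k. \<mu> y > 0 \<longrightarrow> P y = 1"
      "\<forall>p\<in>{0..1}. \<forall>q\<in>{0..1}. E_noisy k Q \<mu> p q \<le> inst_opt Q N I" by blast
    then have "R n \<mu>" unfolding R_def using NI(3) by fastforce
    then show ?thesis by blast
  qed
  then obtain M where M: "\<And>n. R n (M n)" by metis
  have Mprob: "prob_on_cube k (M n)" for n using M unfolding R_def by blast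
  have Mb: "0 \<le> M n y \<and> M n y \<le> 1" if "y \<in> cube k" for n y
  proof -
    have nn: "\<forall>y. 0 \<le> M n y" using Mprob[of n] unfolding prob_on_cube_def by blast
    have "M n y \<le> (\<Sum>y\<in>cube k. M n y)"
      by (rule member_le_sum) (use that nn in \<open>auto simp: finite_cube\<close>)
    then show ?thesis using nn Mprob[of n] unfolding prob_on_cube_def by auto
  qed
  have "\<forall>\<delta>\<subseteq>cube k. \<exists>l::int list \<Rightarrow> real. \<exists>r::nat\<Rightarrow>nat.
    strict_mono r \<and> (\<forall>e>0. eventually (\<lambda>n. \<forall>i\<in>\<delta>. dist (M (r n) i) (l i) < e) sequentially)"
  proof (rule compact_lemma_general[where proj="\<lambda>f y. f y" and unproj="\<lambda>e. e"])
    show "finite (cube k)" by (rule finite_cube)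
    fix y assume y: "y \<in> cube k"
    have "(\<lambda>x. x y) ` range M \<subseteq> {0..1}" using Mb[OF y] by auto
    then show "bounded ((\<lambda>x. x y) ` range M)" by (rule bounded_subset[OF bounded_closed_interval])
  qed auto
  then obtain l r where r: "strict_mono r"
    and conv: "\<forall>e>0. eventually (\<lambda>n. \<forall>i\<in>cube k. dist (M (r n) i) (l i) < e) sequentially"
    by blast
  have lim: "(\<lambda>n. M (r n) y) \<longlonglongrightarrow> l y" if y: "y \<in> cube k" for y
    unfolding tendsto_iff
  proof (intro allI impI)
    fix e :: real assume "e > 0"
    then show "eventually (\<lambda>n. dist (M (r n) y) (l y) < e) sequentially"
    proof -
      have "eventually (\<lambda>n. \<forall>i\<in>cube k. dist (M (r n) i) (l i) < e) sequentially"
        using conv \<open>e > 0\<close> by blast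
      then show ?thesis by (rule eventually_mono) (use y in blast)
    qed
  qed
  define \<mu> where "\<mu> y = (if y \<in> cube k then l y else 0)" for y
  have nn: "0 \<le> \<mu> y" for y
  proof (cases "y \<in> cube k")
    case True
    then have "0 \<le> l y" using lim[OF True] Mb[OF True] by (intro LIMSEQ_le_const) auto
    then show ?thesis using True unfolding \<mu>_def by simp
  qed (simp add: \<mu>_def)
  have s1: "(\<Sum>y\<in>cube k. \<mu> y) = 1"
  proof -
    have "(\<lambda>n. \<Sum>y\<in>cube k. M (r n) y) \<longlonglongrightarrow> (\<Sum>y\<in>cube k. l y)"
      using lim by (intro tendsto_sum) auto
    moreover have "(\<lambda>n. \<Sum>y\<in>cube k. M (r n) y) = (\<lambda>n. 1)"
      using Mprob unfolding prob_on_cube_def by auto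
    ultimately have "(\<Sum>y\<in>cube k. l y) = 1" using LIMSEQ_unique tendsto_const by metis
    then show ?thesis unfolding \<mu>_def by simp
  qed
  have prob: "prob_on_cube k \<mu>" unfolding prob_on_cube_def using nn s1 by (auto simp: \<mu>_def)
  have supp: "\<forall>y\<in>cube k. \<mu> y > 0 \<longrightarrow> P y = 1"
  proof (intro ballI impI)
    fix y assume y: "y \<in> cube k" and pos: "\<mu> y > 0"
    then have "l y > 0" unfolding \<mu>_def by simp
    then have "eventually (\<lambda>n. 0 < M (r n) y) sequentially" using order_tendstoD(1)[OF lim[OF y]] by blast
    then obtain n where "0 < M (r n) y" using eventually_sequentially by auto
    then show "P y = 1" using M[of "r n"] y unfolding R_def by blast
  qed
  have ineq: "E_noisy k Q \<mu> p q \<le> E" if p: "p \<in> {0..1}" and q: "q \<in> {0..1}" for p q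
  proof (rule tendsto_le[OF sequentially_bot])
    show "(\<lambda>n. E_noisy k Q (M (r n)) p q) \<longlonglongrightarrow> E_noisy k Q \<mu> p q"
      unfolding E_noisy_gN using lim by (intro tendsto_sum tendsto_mult_right) (auto simp: \<mu>_def)
    show "(\<lambda>n. E + inverse (real (Suc n))) \<longlonglongrightarrow> E"
      using tendsto_add[OF tendsto_const LIMSEQ_inverse_real_of_nat, of E] by simp
    show "eventually (\<lambda>n. E_noisy k Q (M (r n)) p q \<le> E + inverse (real (Suc n))) sequentially"
    proof (rule always_eventually, rule allI)
      fix n
      have "E_noisy k Q (M (r n)) p q \<le> E + inverse (real (Suc (r n)))"
        using M[of "r n"] p q unfolding R_def by blast
      also have "\<dots> \<le> E + inverse (real (Suc n))"
        using seq_suble[OF r, of n] by (simp add: le_imp_inverse_le)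
      finally show "E_noisy k Q (M (r n)) p q \<le> E + inverse (real (Suc n))" .
    qed
  qed
  have "Opt_plus k Q \<mu> \<le> E" by (rule Opt_le) (use ineq in auto)
  moreover have "E \<le> Opt_plus k Q \<mu>" unfolding E_def by (rule Eplus_le_Opt[OF prob])
  ultimately show ?thesis using prob supp unfolding E_def by (intro exI[of _ \<mu>]) auto
qed

definition SS :: "nat \<Rightarrow> int list \<Rightarrow> nat \<Rightarrow> nat set" where
  "SS N y i = (if y!i = 1 then {..<N} else {N..<2*N})"

definition TT :: "nat \<Rightarrow> nat \<Rightarrow> int list \<Rightarrow> nat list set" where
  "TT N k y = LS k (SS N y)"

definition DD :: "nat \<Rightarrow> nat \<Rightarrow> int list \<Rightarrow> nat list set" where
  "DD N k y = {a\<in>TT N k y. distinct a}"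

lemma SS_finite: "finite (SS N y i)" by (simp add: SS_def)
lemma SS_card: "card (SS N y i) = N" by (simp add: SS_def)
lemma SS_sub: "SS N y i \<subseteq> {..<2*N}" by (auto simp: SS_def)

lemma TT_finite: "finite (TT N k y)" unfolding TT_def by (rule LS_finite) (simp add: SS_finite)
lemma TT_card: "card (TT N k y) = N ^ k" unfolding TT_def by (subst LS_card) (simp_all add: SS_finite SS_card)
lemma DD_finite: "finite (DD N k y)" unfolding DD_def using TT_finite by simp

lemma TT_mem: "a \<in> TT N k y \<Longrightarrow> length a = k \<and> set a \<subseteq> {..<2*N}"
  unfolding TT_def LS_def using SS_sub by (fastforce simp: in_set_conv_nth)

lemma DD_nonempty:
  assumes "k \<le> N"
  shows "map (\<lambda>i. if y!i = 1 then i else N + i) [0..<k] \<in> DD N k y"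
proof -
  define a where "a = map (\<lambda>i. if y!i = 1 then i else N + i) [0..<k]"
  have "inj_on (\<lambda>i. if y!i = 1 then i else N + i) {0..<k}"
    using assms by (auto simp: inj_on_def split: if_splits)
  then have "distinct a" unfolding a_def by (simp add: distinct_map)
  moreover have "a \<in> TT N k y" unfolding a_def TT_def LS_def SS_def using assms by auto
  ultimately show ?thesis unfolding DD_def a_def by simp
qed

lemma count_split:
  assumes x: "x \<in> cube (2*N)" and A: "A \<subseteq> {..<2*N}"
  shows "card {v\<in>A. x!v = -1} = card A - card {v\<in>A. x!v = 1}"
proof -
  have "x!v \<in> {-1,1}" if "v \<in> A" for v
    using x A that unfolding cube_LS LS_def by auto
  then have "{v\<in>A. x!v = -1} = A - {v\<in>A. x!v = 1}" by auto
  moreover have "finite A" using A finite_subset by blast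
  ultimately show ?thesis by (simp add: card_Diff_subset)
qed

lemma TT_sum:
  fixes Q :: "int list \<Rightarrow> real"
  assumes x: "x \<in> cube (2*N)" and N: "N > 0" and y: "y \<in> cube k"
  defines "s \<equiv> card {v\<in>{..<N}. x!v = 1}" and "t \<equiv> card {v\<in>{N..<2*N}. x!v = 1}"
  shows "(\<Sum>a\<in>TT N k y. Q (map (nth x) a)) = real N ^ k * gN k Q y (1 - real s / N) (real t / N)"
proof -
  define p where "p = 1 - real s / N"
  define q where "q = real t / N"
  have "s \<le> card {..<N}" unfolding s_def by (rule card_mono) auto
  then have sN: "s \<le> N" by simp
  have "t \<le> card {N..<2*N}" unfolding t_def by (rule card_mono) auto
  then have tN: "t \<le> N" by simp
  have cnt: "real (card {v\<in>SS N y i. x!v = b}) = real N * flip_prob p q (y!i) b"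
    if i: "i < k" and b: "b \<in> {-1,1}" for i b
  proof -
    have yi: "y!i \<in> {-1,1}" using y i unfolding cube_LS LS_def by auto
    have c1: "card {v\<in>{..<N}. x!v = -1} = N - s"
      using count_split[OF x, of "{..<N}"] unfolding s_def by auto
    have c2: "card {v\<in>{N..<2*N}. x!v = -1} = N - t"
      using count_split[OF x, of "{N..<2*N}"] unfolding t_def by (simp add: subset_iff)
    have s1: "card {v\<in>{..<N}. x!v = 1} = s" and t1: "card {v\<in>{N..<2*N}. x!v = 1} = t"
      unfolding s_def t_def by simp_all
    show ?thesis
      using yi b c1 c2 sN tN N s1 t1 unfolding SS_def flip_prob_def p_def q_def
      by (auto simp: field_simps of_nat_diff)
  qed
  have mapin: "map (nth x) a \<in> cube k" if "a \<in> TT N k y" for a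
    using map_in_cube[OF x] TT_mem[OF that] by blast
  have "(\<Sum>a\<in>TT N k y. Q (map (nth x) a)) = (\<Sum>a\<in>TT N k y. 1 * Q (map (nth x) a))" by simp
  also have "\<dots> = (\<Sum>z\<in>cube k. Q z * (\<Sum>a\<in>{a\<in>TT N k y. map (nth x) a = z}. 1))"
    by (rule sum_group_weighted) (auto simp: finite_cube TT_finite mapin)
  also have "\<dots> = (\<Sum>z\<in>cube k. Q z * (real N ^ k * (\<Prod>i<k. flip_prob p q (y!i) (z!i))))"
  proof (intro sum.cong refl arg_cong2[where f="(*)"])
    fix z assume z: "z \<in> cube k"
    have zi: "z!i \<in> {-1,1}" if "i<k" for i using z that unfolding cube_LS LS_def by auto
    have seteq: "{a\<in>TT N k y. map (nth x) a = z} = LS k (\<lambda>i. {v\<in>SS N y i. x!v = z!i})"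
    proof (intro set_eqI iffI)
      fix a assume "a \<in> {a\<in>TT N k y. map (nth x) a = z}"
      then show "a \<in> LS k (\<lambda>i. {v\<in>SS N y i. x!v = z!i})"
        unfolding TT_def LS_def by auto
    next
      fix a assume a: "a \<in> LS k (\<lambda>i. {v\<in>SS N y i. x!v = z!i})"
      then have "a \<in> TT N k y" unfolding TT_def LS_def by auto
      moreover have "map (nth x) a = z"
        using a z unfolding LS_def cube_def by (intro nth_equalityI) auto
      ultimately show "a \<in> {a\<in>TT N k y. map (nth x) a = z}" by simp
    qed
    have "(\<Sum>a\<in>{a\<in>TT N k y. map (nth x) a = z}. 1) = real (card (LS k (\<lambda>i. {v\<in>SS N y i. x!v = z!i})))"
      unfolding seteq by simp
    also have "\<dots> = (\<Prod>i<k. real (card {v\<in>SS N y i. x!v = z!i}))"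
      by (subst LS_card) (simp_all add: SS_finite)
    also have "\<dots> = (\<Prod>i<k. real N * flip_prob p q (y!i) (z!i))"
      using cnt zi by (intro prod.cong) auto
    also have "\<dots> = real N ^ k * (\<Prod>i<k. flip_prob p q (y!i) (z!i))"
      by (simp add: prod.distrib)
    finally show "(\<Sum>a\<in>{a\<in>TT N k y. map (nth x) a = z}. 1) = real N ^ k * (\<Prod>i<k. flip_prob p q (y!i) (z!i))" .
  qed
  also have "\<dots> = real N ^ k * gN k Q y p q"
    unfolding gN_def by (simp add: sum_distrib_left algebra_simps)
  finally show ?thesis unfolding p_def q_def .
qed


lemma pair_card:
  assumes ij: "i < k" "j < k" "i \<noteq> j"
  shows "card {a\<in>TT N k y. a!i = a!j} \<le> N ^ (k - 1)"
proof -
  define S' where "S' = (SS N y)(j := {0})"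
  have fin: "finite (LS k S')" by (rule LS_finite) (simp add: S'_def SS_finite)
  have inj: "inj_on (\<lambda>a. a[j := 0]) {a\<in>TT N k y. a!i = a!j}"
  proof (rule inj_onI)
    fix a b assume a: "a \<in> {a\<in>TT N k y. a!i = a!j}" and b: "b \<in> {a\<in>TT N k y. a!i = a!j}"
      and eq: "a[j := 0] = b[j := 0]"
    have la: "length a = k" "length b = k" using a b unfolding TT_def LS_def by auto
    show "a = b"
    proof (rule nth_equalityI)
      show "length a = length b" using la by simp
      fix l assume l: "l < length a"
      show "a!l = b!l"
      proof (cases "l = j")
        case True
        have "a!i = a[j:=0]!i" "b!i = b[j:=0]!i" using ij by simp_all
        then have "a!i = b!i" using eq by simp
        then show ?thesis using a b True by simp
      next
        case False
        then have "a!l = a[j:=0]!l" "b!l = b[j:=0]!l" by simp_all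
        then show ?thesis using eq by simp
      qed
    qed
  qed
  have img: "(\<lambda>a. a[j := 0]) ` {a\<in>TT N k y. a!i = a!j} \<subseteq> LS k S'"
    unfolding TT_def LS_def S'_def by (auto simp: nth_list_update)
  have "card {a\<in>TT N k y. a!i = a!j} \<le> card (LS k S')"
    by (rule card_inj_on_le[OF inj img fin])
  also have "card (LS k S') = (\<Prod>l<k. card (S' l))"
    by (rule LS_card) (simp add: S'_def SS_finite)
  also have "\<dots> = (\<Prod>l<k. if l = j then 1 else N)"
    unfolding S'_def by (intro prod.cong) (auto simp: SS_card)
  also have "\<dots> = (\<Prod>l\<in>{..<k} - {j}. N)"
    using ij by (subst prod.remove[of _ j]) auto
  also have "\<dots> = N ^ (k - 1)" using ij by simp
  finally show ?thesis .
qed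

lemma nondistinct_card:
  "card (TT N k y - DD N k y) \<le> k * k * N ^ (k - 1)"
proof -
  have sub: "TT N k y - DD N k y \<subseteq> (\<Union>i<k. \<Union>j\<in>{..<k} - {i}. {a\<in>TT N k y. a!i = a!j})"
  proof
    fix a assume a: "a \<in> TT N k y - DD N k y"
    then have "length a = k" "\<not> distinct a" "a \<in> TT N k y" unfolding DD_def using TT_mem by auto
    then obtain i j where "i < k" "j < k" "i \<noteq> j" "a!i = a!j" by (auto simp: distinct_conv_nth)
    then show "a \<in> (\<Union>i<k. \<Union>j\<in>{..<k} - {i}. {a\<in>TT N k y. a!i = a!j})" using \<open>a \<in> TT N k y\<close> by blast
  qed
  have "card (TT N k y - DD N k y) \<le> card (\<Union>i<k. \<Union>j\<in>{..<k} - {i}. {a\<in>TT N k y. a!i = a!j})"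
    by (rule card_mono[OF _ sub]) (auto simp: TT_finite)
  also have "\<dots> \<le> (\<Sum>i<k. card (\<Union>j\<in>{..<k} - {i}. {a\<in>TT N k y. a!i = a!j}))"
    by (rule card_UN_le) simp
  also have "\<dots> \<le> (\<Sum>i<k. \<Sum>j\<in>{..<k} - {i}. card {a\<in>TT N k y. a!i = a!j})"
    by (intro sum_mono card_UN_le) simp
  also have "\<dots> \<le> (\<Sum>i<k. \<Sum>j\<in>{..<k} - {i}. N ^ (k - 1))"
    by (intro sum_mono pair_card) auto
  also have "\<dots> \<le> (\<Sum>i<k. \<Sum>j<k. N ^ (k - 1))"
    by (intro sum_mono sum_mono2) auto
  also have "\<dots> = k * k * N ^ (k - 1)" by simp
  finally show ?thesis .
qed

definition lst :: "'a set \<Rightarrow> 'a list" where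
  "lst S = (SOME xs. set xs = S \<and> distinct xs)"

lemma lst: "finite S \<Longrightarrow> set (lst S) = S \<and> distinct (lst S)"
  unfolding lst_def by (rule someI_ex) (rule finite_distinct_list)

lemma sum_list_lst: "finite S \<Longrightarrow> (\<Sum>a\<leftarrow>lst S. h a) = sum h S"
  using lst[of S] sum.distinct_set_conv_list[of "lst S" h] by simp

definition INST :: "nat \<Rightarrow> nat \<Rightarrow> (int list \<Rightarrow> nat) \<Rightarrow> nat list list" where
  "INST N k c = concat (map (\<lambda>y. concat (replicate (c y) (lst (DD N k y)))) (lst (cube k)))"

lemma sum_list_concat_map:
  fixes h :: "'a \<Rightarrow> real"
  shows "(\<Sum>a\<leftarrow>concat xss. h a) = (\<Sum>xs\<leftarrow>xss. \<Sum>a\<leftarrow>xs. h a)"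
  by (induction xss) auto

lemma sum_list_concat_replicate:
  fixes h :: "'a \<Rightarrow> real"
  shows "(\<Sum>a\<leftarrow>concat (replicate n xs). h a) = real n * (\<Sum>a\<leftarrow>xs. h a)"
  by (induction n) (auto simp: algebra_simps)

lemma INST_sum:
  fixes h :: "nat list \<Rightarrow> real"
  shows "(\<Sum>a\<leftarrow>INST N k c. h a) = (\<Sum>y\<in>cube k. real (c y) * (\<Sum>a\<in>DD N k y. h a))"
proof -
  have "(\<Sum>a\<leftarrow>INST N k c. h a) = (\<Sum>y\<leftarrow>lst (cube k). real (c y) * (\<Sum>a\<leftarrow>lst (DD N k y). h a))"
    unfolding INST_def sum_list_concat_map by (simp add: sum_list_concat_replicate o_def)
  also have "\<dots> = (\<Sum>y\<leftarrow>lst (cube k). real (c y) * (\<Sum>a\<in>DD N k y. h a))"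
    by (simp add: sum_list_lst DD_finite)
  also have "\<dots> = (\<Sum>y\<in>cube k. real (c y) * (\<Sum>a\<in>DD N k y. h a))"
    by (rule sum_list_lst) (rule finite_cube)
  finally show ?thesis .
qed

lemma INST_set: "a \<in> set (INST N k c) \<longleftrightarrow> (\<exists>y\<in>cube k. c y > 0 \<and> a \<in> DD N k y)"
  unfolding INST_def using lst[OF finite_cube[of k]] lst[OF DD_finite] by auto

lemma INST_length: "real (length (INST N k c)) = (\<Sum>y\<in>cube k. real (c y) * real (card (DD N k y)))"
  using INST_sum[of "\<lambda>_. 1" N k c] by (simp add: sum_list_const_real)

lemma alg:
  fixes c g dsum dcard r u \<mu> f :: "'b \<Rightarrow> real"
  assumes fin: "finite C"
    and h: "\<And>y. y \<in> C \<Longrightarrow> 0 \<le> c y \<and> dsum y = n * g y - r y \<and> \<bar>r y\<bar> \<le> Q0 * u y \<and>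
        dcard y = n - u y \<and> 0 \<le> u y \<and> (2*Q0+\<epsilon>) * u y \<le> n * \<epsilon> / 2 \<and>
        c y = M * \<mu> y - f y \<and> 0 \<le> f y \<and> f y \<le> 1 \<and> \<bar>g y\<bar> \<le> Q0 \<and> 0 \<le> \<mu> y"
    and s\<mu>: "(\<Sum>y\<in>C. \<mu> y) = 1" and eps: "\<epsilon> > 0" and Q0: "0 \<le> Q0" and n: "0 \<le> n"
    and big: "2 * Q0 * real (card C) \<le> \<epsilon> / 2 * (\<Sum>y\<in>C. c y)"
    and G: "G = (\<Sum>y\<in>C. \<mu> y * g y)"
  shows "(\<Sum>y\<in>C. c y * dsum y) \<le> (G + \<epsilon>) * (\<Sum>y\<in>C. c y * dcard y)"
proof -
  have "\<bar>G\<bar> \<le> (\<Sum>y\<in>C. \<bar>\<mu> y * g y\<bar>)" unfolding G by (rule sum_abs)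
  also have "\<dots> \<le> (\<Sum>y\<in>C. \<mu> y * Q0)"
  proof (rule sum_mono)
    fix y assume y: "y \<in> C"
    then show "\<bar>\<mu> y * g y\<bar> \<le> \<mu> y * Q0" using h[OF y] by (simp add: abs_mult mult_left_mono)
  qed
  also have "\<dots> = Q0" using s\<mu> by (simp add: sum_distrib_right[symmetric])
  finally have GQ: "\<bar>G\<bar> \<le> Q0" .
  have per: "c y * dsum y - (G + \<epsilon>) * (c y * dcard y) \<le> c y * (n * (g y - G - \<epsilon> / 2))"
    if y: "y \<in> C" for y
  proof -
    note hy = h[OF y]
    have "(G + \<epsilon>) * u y \<le> (Q0 + \<epsilon>) * u y" using GQ hy by (intro mult_right_mono) auto
    then have "dsum y - (G + \<epsilon>) * dcard y \<le> n * (g y - G - \<epsilon> / 2)"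
    proof -
      have e1: "dsum y - (G + \<epsilon>) * dcard y = n * (g y - G - \<epsilon>) - r y + (G + \<epsilon>) * u y"
      proof -
        have d1: "dsum y = n * g y - r y" and d2: "dcard y = n - u y" using hy by blast+
        show ?thesis unfolding d1 d2 by (simp add: algebra_simps)
      qed
      have e2: "- r y \<le> Q0 * u y" using hy by linarith
      have e3: "(2*Q0+\<epsilon>) * u y \<le> n * \<epsilon> / 2" using hy by blast
      have e4: "n * (g y - G - \<epsilon> / 2) = n * (g y - G - \<epsilon>) + n * \<epsilon> / 2" by (simp add: algebra_simps)
      have e5: "Q0 * u y + (Q0 + \<epsilon>) * u y = (2*Q0+\<epsilon>) * u y" by (simp add: algebra_simps)
      show ?thesis using e1 e2 e3 e4 e5 \<open>(G + \<epsilon>) * u y \<le> (Q0 + \<epsilon>) * u y\<close> by linarith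
    qed
    then have "c y * (dsum y - (G + \<epsilon>) * dcard y) \<le> c y * (n * (g y - G - \<epsilon> / 2))"
      using hy by (intro mult_left_mono) auto
    then show ?thesis by (simp add: algebra_simps)
  qed
  have cg: "(\<Sum>y\<in>C. c y * (g y - G)) = (\<Sum>y\<in>C. f y * (G - g y))"
  proof -
    have "(\<Sum>y\<in>C. c y * (g y - G)) = (\<Sum>y\<in>C. M * (\<mu> y * g y) - G * (M * \<mu> y) + f y * (G - g y))"
    proof (intro sum.cong refl)
      fix y assume y: "y \<in> C"
      have cy: "c y = M * \<mu> y - f y" using h[OF y] by blast
      show "c y * (g y - G) = M * (\<mu> y * g y) - G * (M * \<mu> y) + f y * (G - g y)"
        unfolding cy by (simp add: algebra_simps)
    qed
    also have "\<dots> = M * G - G * M + (\<Sum>y\<in>C. f y * (G - g y))"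
      by (simp add: sum.distrib sum_subtractf sum_distrib_left[symmetric] G s\<mu>)
    finally show ?thesis by simp
  qed
  have fb: "(\<Sum>y\<in>C. f y * (G - g y)) \<le> (\<Sum>y\<in>C. 2 * Q0)"
  proof (rule sum_mono)
    fix y assume y: "y \<in> C"
    note hy = h[OF y]
    have a: "G - g y \<le> 2 * Q0" using GQ hy by auto
    have b: "0 \<le> 2 * Q0" using Q0 by simp
    have "f y * (G - g y) \<le> f y * (2 * Q0)" using a hy by (intro mult_left_mono) auto
    also have "\<dots> \<le> 1 * (2 * Q0)" using b hy by (intro mult_right_mono) auto
    finally show "f y * (G - g y) \<le> 2 * Q0" by simp
  qed
  have s2: "(\<Sum>y\<in>C. 2 * Q0) = 2 * Q0 * real (card C)" by simp
  have inner: "(\<Sum>y\<in>C. c y * (g y - G)) - \<epsilon> / 2 * (\<Sum>y\<in>C. c y) \<le> 0"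
    using cg fb s2 big by linarith
  have "(\<Sum>y\<in>C. c y * dsum y) - (G + \<epsilon>) * (\<Sum>y\<in>C. c y * dcard y)
      = (\<Sum>y\<in>C. c y * dsum y - (G + \<epsilon>) * (c y * dcard y))"
    by (simp add: sum_subtractf sum_distrib_left)
  also have "\<dots> \<le> (\<Sum>y\<in>C. c y * (n * (g y - G - \<epsilon> / 2)))"
    by (rule sum_mono) (rule per)
  also have "\<dots> = n * ((\<Sum>y\<in>C. c y * (g y - G)) - \<epsilon> / 2 * (\<Sum>y\<in>C. c y))"
  proof -
    have "(\<lambda>y. c y * (n * (g y - G - \<epsilon> / 2))) = (\<lambda>y. n * (c y * (g y - G)) - (n * (\<epsilon> / 2)) * c y)"
      by (rule ext) (simp add: algebra_simps)
    then have "(\<Sum>y\<in>C. c y * (n * (g y - G - \<epsilon> / 2))) = (\<Sum>y\<in>C. n * (c y * (g y - G))) - (\<Sum>y\<in>C. (n * (\<epsilon> / 2)) * c y)"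
      by (simp only: sum_subtractf[symmetric])
    also have "\<dots> = n * (\<Sum>y\<in>C. c y * (g y - G)) - (n * (\<epsilon> / 2)) * (\<Sum>y\<in>C. c y)"
      by (simp only: sum_distrib_left)
    finally show ?thesis by (simp add: algebra_simps)
  qed
  also have "\<dots> \<le> 0" using inner n by (simp add: mult_nonneg_nonpos)
  finally show ?thesis by simp
qed

lemma xstar_cube: "map (\<lambda>i. if i < N then 1 else -1) [0..<2*N] \<in> cube (2*N)"
  unfolding cube_def by auto

lemma xstar_map:
  assumes "a \<in> DD N k y" "y \<in> cube k"
  shows "map (nth (map (\<lambda>i. if i < N then (1::int) else -1) [0..<2*N])) a = y"
proof (rule nth_equalityI)
  have a: "length a = k" "\<forall>i<k. a!i \<in> SS N y i" using assms unfolding DD_def TT_def LS_def by auto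
  have yl: "length y = k" using assms unfolding cube_def by auto
  show "length (map (nth (map (\<lambda>i. if i < N then (1::int) else -1) [0..<2*N])) a) = length y"
    using a yl by simp
  fix i assume "i < length (map (nth (map (\<lambda>i. if i < N then (1::int) else -1) [0..<2*N])) a)"
  then have i: "i < k" using a by simp
  have yi: "y!i \<in> {-1,1}" using assms i unfolding cube_LS LS_def by auto
  have "a!i \<in> SS N y i" using a i by auto
  then show "map (nth (map (\<lambda>i. if i < N then (1::int) else -1) [0..<2*N])) a ! i = y ! i"
    using i a yi unfolding SS_def by (auto split: if_splits)
qed

lemma cube_nonempty: "replicate k 1 \<in> cube k"
proof -
  have "set (replicate k (1::int)) \<subseteq> {-1,1}" by (cases k) auto
  then show ?thesis by (simp add: cube_def)
qed


lemma val_bound: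
  fixes Q \<mu> :: "int list \<Rightarrow> real" and c :: "int list \<Rightarrow> nat"
  assumes prob: "prob_on_cube k \<mu>" and x: "x \<in> cube (2*N)" and N: "N > 0" and eps: "\<epsilon> > 0"
    and cb: "\<And>y. y \<in> cube k \<Longrightarrow> real (c y) \<le> M * \<mu> y \<and> M * \<mu> y - 1 \<le> real (c y)"
    and Nbig: "(2 * QM k Q + \<epsilon>) * real (k * k) \<le> real N * \<epsilon> / 2"
    and big: "2 * QM k Q * real (card (cube k)) \<le> \<epsilon> / 2 * (\<Sum>y\<in>cube k. real (c y))"
  shows "\<exists>p q. p \<in> {0..1} \<and> q \<in> {0..1} \<and>
     (\<Sum>a\<leftarrow>INST N k c. Q (map (nth x) a)) \<le> (E_noisy k Q \<mu> p q + \<epsilon>) * real (length (INST N k c))"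
proof -
  define s where "s = card {v\<in>{..<N}. x!v = 1}"
  define t where "t = card {v\<in>{N..<2*N}. x!v = 1}"
  define p where "p = 1 - real s / N"
  define q where "q = real t / N"
  have "s \<le> card {..<N}" unfolding s_def by (rule card_mono) auto
  then have sN: "s \<le> N" by simp
  have "t \<le> card {N..<2*N}" unfolding t_def by (rule card_mono) auto
  then have tN: "t \<le> N" by simp
  have p: "p \<in> {0..1}" using sN N unfolding p_def by (auto simp: field_simps)
  have q: "q \<in> {0..1}" using tN N unfolding q_def by (auto simp: field_simps)
  define Q0 where "Q0 = QM k Q"
  define h where "h a = Q (map (nth x) a)" for a
  define dsum where "dsum y = (\<Sum>a\<in>DD N k y. h a)" for y
  define r where "r y = (\<Sum>a\<in>TT N k y - DD N k y. h a)" for y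
  define u where "u y = real (card (TT N k y - DD N k y))" for y
  define dcard where "dcard y = real (card (DD N k y))" for y
  define g where "g y = gN k Q y p q" for y
  define n where "n = real N ^ k"
  define f where "f y = M * \<mu> y - real (c y)" for y
  define G where "G = E_noisy k Q \<mu> p q"
  have DDsub: "DD N k y \<subseteq> TT N k y" for y unfolding DD_def by auto
  have hb: "\<bar>h a\<bar> \<le> Q0" if "a \<in> TT N k y" for a y
    unfolding h_def Q0_def using TT_mem[OF that] by (intro Q_le_QM map_in_cube[OF x]) auto
  have hyp: "0 \<le> real (c y) \<and> dsum y = n * g y - r y \<and> \<bar>r y\<bar> \<le> Q0 * u y \<and>
        dcard y = n - u y \<and> 0 \<le> u y \<and> (2*Q0+\<epsilon>) * u y \<le> n * \<epsilon> / 2 \<and>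
        real (c y) = M * \<mu> y - f y \<and> 0 \<le> f y \<and> f y \<le> 1 \<and> \<bar>g y\<bar> \<le> Q0 \<and> 0 \<le> \<mu> y"
    if y: "y \<in> cube k" for y
  proof -
    have tot: "(\<Sum>a\<in>TT N k y. h a) = n * g y"
      unfolding h_def n_def g_def p_def q_def s_def t_def by (rule TT_sum[OF x N y])
    have "(\<Sum>a\<in>TT N k y. h a) = r y + dsum y"
      unfolding r_def dsum_def by (rule sum.subset_diff[OF DDsub TT_finite])
    then have d1: "dsum y = n * g y - r y" using tot by simp
    have "\<bar>r y\<bar> \<le> (\<Sum>a\<in>TT N k y - DD N k y. \<bar>h a\<bar>)" unfolding r_def by (rule sum_abs)
    also have "\<dots> \<le> (\<Sum>a\<in>TT N k y - DD N k y. Q0)" using hb by (intro sum_mono) auto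
    also have "\<dots> = Q0 * u y" unfolding u_def by simp
    finally have d2: "\<bar>r y\<bar> \<le> Q0 * u y" .
    have "card (TT N k y - DD N k y) = card (TT N k y) - card (DD N k y)"
      by (rule card_Diff_subset[OF DD_finite DDsub])
    moreover have "card (DD N k y) \<le> card (TT N k y)" by (rule card_mono[OF TT_finite DDsub])
    ultimately have d3: "dcard y = n - u y" unfolding dcard_def u_def n_def
      by (simp add: TT_card of_nat_diff)
    have uk: "u y \<le> real (k * k) * real N ^ (k - 1)"
      using nondistinct_card[of N k y] unfolding u_def
      by (metis of_nat_le_iff of_nat_mult of_nat_power)
    have d4: "(2*Q0+\<epsilon>) * u y \<le> n * \<epsilon> / 2"
    proof (cases "k = 0")
      case True
      then have "u y \<le> 0" using uk by simp
      then have "u y = 0" unfolding u_def by simp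
      then show ?thesis using eps unfolding n_def by simp
    next
      case False
      have Q0n: "0 \<le> 2*Q0+\<epsilon>" using QM_nonneg eps unfolding Q0_def by (simp add: add_nonneg_nonneg)
      have "(2*Q0+\<epsilon>) * u y \<le> (2*Q0+\<epsilon>) * (real (k * k) * real N ^ (k - 1))"
        using uk Q0n by (rule mult_left_mono)
      also have "\<dots> = ((2*Q0+\<epsilon>) * real (k * k)) * real N ^ (k - 1)" by simp
      also have "\<dots> \<le> (real N * \<epsilon> / 2) * real N ^ (k - 1)"
        using Nbig unfolding Q0_def by (rule mult_right_mono) simp
      also have "\<dots> = n * \<epsilon> / 2" unfolding n_def using False
        by (simp add: power_eq_if)
      finally show ?thesis .
    qed
    have "\<mu> y \<ge> 0" using prob unfolding prob_on_cube_def by auto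
    then show ?thesis using d1 d2 d3 d4 cb[OF y] gN_bound[OF p q, of k Q y]
      unfolding f_def u_def g_def Q0_def by auto
  qed
  have s\<mu>: "(\<Sum>y\<in>cube k. \<mu> y) = 1" using prob unfolding prob_on_cube_def by auto
  have Gd: "G = (\<Sum>y\<in>cube k. \<mu> y * g y)" unfolding G_def g_def by (rule E_noisy_gN)
  have "(\<Sum>y\<in>cube k. real (c y) * dsum y) \<le> (G + \<epsilon>) * (\<Sum>y\<in>cube k. real (c y) * dcard y)"
    by (rule alg[OF finite_cube hyp s\<mu> eps _ _ _ Gd])
       (use QM_nonneg big in \<open>auto simp: Q0_def n_def\<close>)
  moreover have "(\<Sum>a\<leftarrow>INST N k c. Q (map (nth x) a)) = (\<Sum>y\<in>cube k. real (c y) * dsum y)"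
    using INST_sum[of h N k c] unfolding h_def dsum_def by simp
  moreover have "real (length (INST N k c)) = (\<Sum>y\<in>cube k. real (c y) * dcard y)"
    unfolding dcard_def by (rule INST_length)
  ultimately show ?thesis using p q unfolding G_def by auto
qed

lemma dir2:
  fixes P Q \<mu> :: "int list \<Rightarrow> real"
  assumes P01: "\<forall>x\<in>cube k. P x \<in> {0, 1}" and prob: "prob_on_cube k \<mu>"
    and supp: "\<forall>y\<in>cube k. \<mu> y > 0 \<longrightarrow> P y = 1" and opt: "Opt_plus k Q \<mu> = E_Q_plus k Q"
  shows "pos_it_useless k P Q"
  unfolding pos_it_useless_def
proof (intro allI impI)
  fix \<epsilon> :: real assume eps: "\<epsilon> > 0"
  define Q0 where "Q0 = QM k Q"
  have Q0: "0 \<le> Q0" unfolding Q0_def by (rule QM_nonneg)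
  define c0 where "c0 = real (card (cube k))"
  have c0: "1 \<le> c0"
  proof -
    have "cube k \<noteq> {}" using cube_nonempty by blast
    then have "card (cube k) \<ge> 1" using finite_cube by (simp add: Suc_le_eq card_gt_0_iff)
    then show ?thesis unfolding c0_def by simp
  qed
  define M where "M = c0 + 4 * Q0 * c0 / \<epsilon> + 1"
  define c where "c y = nat \<lfloor>M * \<mu> y\<rfloor>" for y
  define N where "N = k + 1 + nat \<lceil>2 * (2 * Q0 + \<epsilon>) * real (k * k) / \<epsilon>\<rceil>"
  have N0: "N > 0" and kN: "k \<le> N" unfolding N_def by auto
  have Nbig: "(2 * QM k Q + \<epsilon>) * real (k * k) \<le> real N * \<epsilon> / 2"
  proof -
    have "2 * (2 * Q0 + \<epsilon>) * real (k * k) / \<epsilon> \<le> real N"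
      unfolding N_def by linarith
    then have "2 * (2 * Q0 + \<epsilon>) * real (k * k) \<le> real N * \<epsilon>"
      using eps by (simp add: divide_le_eq)
    then show ?thesis unfolding Q0_def by (simp add: algebra_simps)
  qed
  have Mpos: "M > 0" unfolding M_def using c0 Q0 eps by (simp add: add_pos_nonneg)
  have mu_nn: "0 \<le> \<mu> y" for y using prob unfolding prob_on_cube_def by auto
  have cb: "real (c y) \<le> M * \<mu> y \<and> M * \<mu> y - 1 \<le> real (c y)" for y
  proof -
    have "0 \<le> M * \<mu> y" using Mpos mu_nn by simp
    then show ?thesis unfolding c_def by linarith
  qed
  have sc: "M - c0 \<le> (\<Sum>y\<in>cube k. real (c y))"
  proof -
    have "(\<Sum>y\<in>cube k. M * \<mu> y - 1) \<le> (\<Sum>y\<in>cube k. real (c y))" using cb by (intro sum_mono) auto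
    moreover have "(\<Sum>y\<in>cube k. M * \<mu> y - 1) = M - c0"
      using prob unfolding prob_on_cube_def c0_def by (simp add: sum_subtractf sum_distrib_left[symmetric])
    ultimately show ?thesis by simp
  qed
  have big: "2 * QM k Q * real (card (cube k)) \<le> \<epsilon> / 2 * (\<Sum>y\<in>cube k. real (c y))"
  proof -
    have "\<epsilon> / 2 * (M - c0) \<le> \<epsilon> / 2 * (\<Sum>y\<in>cube k. real (c y))"
      using sc eps by (intro mult_left_mono) auto
    moreover have "\<epsilon> / 2 * (M - c0) = 2 * Q0 * c0 + \<epsilon> / 2"
      unfolding M_def using eps by (simp add: field_simps)
    ultimately show ?thesis using eps unfolding Q0_def c0_def by linarith
  qed
  define I where "I = INST N k c"
  have sum_pos: "(\<Sum>y\<in>cube k. real (c y)) > 0" using sc unfolding M_def using Q0 eps c0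
    by (smt (verit, best) divide_nonneg_pos mult_nonneg_nonneg)
  then obtain y0 where y0: "y0 \<in> cube k" "c y0 > 0"
    by (metis (no_types, lifting) gr0I of_nat_0 sum.neutral less_irrefl)
  obtain a0 where a0: "a0 \<in> DD N k y0" using DD_nonempty[OF kN] by blast
  have a0I: "a0 \<in> set I" unfolding I_def INST_set using y0 a0 by blast
  then have Ine: "I \<noteq> []" by auto
  have vi: "valid_instance (2*N) k I"
    unfolding valid_instance_def
  proof (intro conjI Ine ballI)
    fix a assume "a \<in> set I"
    then obtain y where "a \<in> DD N k y" unfolding I_def INST_set by blast
    then have "a \<in> TT N k y" "distinct a" unfolding DD_def by auto
    then show "length a = k" "distinct a" "set a \<subseteq> {..<2*N}"
      using TT_mem[of a N k y] by auto
  qed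
  have memI: "a \<in> set I \<Longrightarrow> a \<in> {a. length a = k \<and> set a \<subseteq> {..<2*N}}" for a
    using vi unfolding valid_instance_def by auto
  have fin2: "finite ((\<lambda>x. inst_val F I x) ` cube (2*N))" for F by (simp add: finite_cube)
  have ne2: "(\<lambda>x. inst_val F I x) ` cube (2*N) \<noteq> {}" for F using cube_nonempty by blast
  have lpos: "real (length I) > 0" using Ine by simp
  define xs where "xs = map (\<lambda>i. if i < N then (1::int) else -1) [0..<2*N]"
  have Pval: "inst_val P I xs = 1"
  proof -
    have "P (map (nth xs) a) = 1" if a: "a \<in> set I" for a
    proof -
      obtain y where y: "y \<in> cube k" "c y > 0" "a \<in> DD N k y" using a unfolding I_def INST_set by blast
      have "map (nth xs) a = y" unfolding xs_def by (rule xstar_map[OF y(3,1)])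
      moreover have "\<mu> y > 0"
      proof (rule ccontr)
        assume "\<not> \<mu> y > 0"
        then have "\<mu> y \<le> 0" by simp
        then have "M * \<mu> y \<le> 0" using Mpos by (simp add: mult_nonneg_nonpos)
        then have "c y = 0" unfolding c_def by simp
        then show False using y by simp
      qed
      ultimately show ?thesis using supp y by auto
    qed
    then have "(\<Sum>a\<leftarrow>I. P (map (nth xs) a)) = (\<Sum>a\<leftarrow>I. 1)" by (intro arg_cong[where f=sum_list] map_cong) auto
    then show ?thesis unfolding inst_val_def using lpos by (simp add: sum_list_const_real)
  qed
  have Ple: "inst_val P I x \<le> 1" if x: "x \<in> cube (2*N)" for x
  proof -
    have "(\<Sum>a\<leftarrow>I. P (map (nth x) a)) \<le> (\<Sum>a\<leftarrow>I. 1)"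
    proof (rule sum_list_mono)
      fix a assume "a \<in> set I"
      then have "map (nth x) a \<in> cube k" using memI map_in_cube[OF x] by blast
      then have "P (map (nth x) a) \<in> {0,1}" using P01 by blast
      then show "P (map (nth x) a) \<le> 1" by auto
    qed
    then show ?thesis unfolding inst_val_def using lpos by (simp add: sum_list_const_real divide_le_eq)
  qed
  have Popt: "inst_opt P (2*N) I = 1"
    unfolding inst_opt_def
  proof (rule Max_eqI[OF fin2])
    show "\<And>v. v \<in> (\<lambda>x. inst_val P I x) ` cube (2*N) \<Longrightarrow> v \<le> 1" using Ple by auto
    show "1 \<in> (\<lambda>x. inst_val P I x) ` cube (2*N)" using Pval xstar_cube unfolding xs_def by force
  qed
  have Qle: "inst_val Q I x \<le> E_Q_plus k Q + \<epsilon>" if x: "x \<in> cube (2*N)" for x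
  proof -
    obtain p q where pq: "p \<in> {0..1}" "q \<in> {0..1}"
      "(\<Sum>a\<leftarrow>I. Q (map (nth x) a)) \<le> (E_noisy k Q \<mu> p q + \<epsilon>) * real (length I)"
      using val_bound[OF prob x N0 eps cb Nbig big] unfolding I_def by blast
    have "inst_val Q I x \<le> E_noisy k Q \<mu> p q + \<epsilon>"
      unfolding inst_val_def using pq(3) lpos by (simp add: divide_le_eq)
    also have "\<dots> \<le> Opt_plus k Q \<mu> + \<epsilon>" using noisy_le_Opt[OF prob pq(1,2)] by simp
    finally show ?thesis using opt by simp
  qed
  have Qopt: "inst_opt Q (2*N) I \<le> E_Q_plus k Q + \<epsilon>"
    unfolding inst_opt_def using Qle by (subst Max_le_iff[OF fin2 ne2]) auto
  show "\<exists>n I. valid_instance n k I \<and> inst_opt P n I = 1 \<and> inst_opt Q n I \<le> E_Q_plus k Q + \<epsilon>"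
    using vi Popt Qopt by blast
qed

theorem theorem6p2:
  fixes k :: nat and P Q :: "int list \<Rightarrow> real"
  assumes "\<forall>x\<in>cube k. P x \<in> {0, 1}"
  shows "pos_it_useless k P Q \<longleftrightarrow>
    (\<exists>\<mu>. prob_on_cube k \<mu> \<and> (\<forall>y\<in>cube k. \<mu> y > 0 \<longrightarrow> P y = 1) \<and>
         Opt_plus k Q \<mu> = E_Q_plus k Q)"
  using dir1[OF assms] dir2[OF assms] by blast

end
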